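(* Let $L$ be a Latin square of order $n$ and let $\sigma=(\alpha,\beta,\gamma;(12))$ be an autoparatopism of $L$. Suppose $(i,j,k)\in O(L)$, and let $a=o_{\alpha\beta}(i)$, $b=o_{\beta\alpha}(j)$ and $c=o_\gamma(k)$. Then $$\operatorname{lcm}(2a,2b)=\operatorname{lcm}(2a,c)=\operatorname{lcm}(2b,c)=\operatorname{lcm}(2a,2b,c).$$
   Context: A Latin square $L$ of order $n$ is an $n\times n$ array with rows, columns and symbols indexed by $[n]=\{1,\dots,n\}$, in which each symbol occurs exactly once in each row and each column. Its set of triples is $O(L)=\{(i,j,L(i,j)):i,j\in[n]\}$. Permutations in $\mathcal S_n$ act on the right, and products are composed left to right: $i(\alpha\beta)=(i\alpha)\beta$. A paratopism is $\sigma=(\alpha,\beta,\gamma;\delta)$ with $\alpha,\beta,\gamma\in\mathcal S_n$ and $\delta\in\mathcal S_3$. It maps $L$ to the Latin square $L^\sigma$ whose triple set is obtained by replacing each triple $(x,y,z)\in O(L)$ with $(x\alpha,y\beta,z\gamma)$ and then permuting the three coordinates according to $\delta$. In particular, for $\delta=(12)$ the triple $(x,y,z)$ maps to $(y\beta,x\alpha,z\gamma)$. $\sigma$ is an autoparatopism of $L$ if $L^\sigma=L$. For a permutation $\pi$ and a point $i$, $o_\pi(i)$ denotes the length of the cycle of $\pi$ containing $i$; fixed points count as cycles of length $1$. *)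

theory Defs
  imports "HOL-Combinatorics.Combinatorics"
begin

text \<open>Latin squares of order n on the index set [n] = {1..n}, represented as
  functions L :: nat => nat => nat (only values on [n] x [n] matter).\<close>

definition latin_square :: "nat \<Rightarrow> (nat \<Rightarrow> nat \<Rightarrow> nat) \<Rightarrow> bool" where
  "latin_square n L \<longleftrightarrow>
     (\<forall>i\<in>{1..n}. bij_betw (\<lambda>j. L i j) {1..n} {1..n}) \<and>
     (\<forall>j\<in>{1..n}. bij_betw (\<lambda>i. L i j) {1..n} {1..n})"

definition triples :: "nat \<Rightarrow> (nat \<Rightarrow> nat \<Rightarrow> nat) \<Rightarrow> (nat \<times> nat \<times> nat) set" where
  "triples n L = {(i, j, L i j) | i j. i \<in> {1..n} \<and> j \<in> {1..n}}"

definition paratopism_12_image ::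
  "(nat \<Rightarrow> nat) \<Rightarrow> (nat \<Rightarrow> nat) \<Rightarrow> (nat \<Rightarrow> nat) \<Rightarrow> (nat \<times> nat \<times> nat) set \<Rightarrow> (nat \<times> nat \<times> nat) set" where
  "paratopism_12_image \<alpha> \<beta> \<gamma> T = (\<lambda>(x, y, z). (\<beta> y, \<alpha> x, \<gamma> z)) ` T"

definition autoparatopism_12 ::
  "nat \<Rightarrow> (nat \<Rightarrow> nat \<Rightarrow> nat) \<Rightarrow> (nat \<Rightarrow> nat) \<Rightarrow> (nat \<Rightarrow> nat) \<Rightarrow> (nat \<Rightarrow> nat) \<Rightarrow> bool" where
  "autoparatopism_12 n L \<alpha> \<beta> \<gamma> \<longleftrightarrow>
     \<alpha> permutes {1..n} \<and> \<beta> permutes {1..n} \<and> \<gamma> permutes {1..n} \<and>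
     paratopism_12_image \<alpha> \<beta> \<gamma> (triples n L) = triples n L"

definition cycle_len :: "(nat \<Rightarrow> nat) \<Rightarrow> nat \<Rightarrow> nat" where
  "cycle_len \<pi> i = card (orbit \<pi> i)"

end

theory Submission
  imports Defs
begin

lemma ord_dvd:
  assumes "permutation p"
  shows "(p^^t) x = x \<longleftrightarrow> card (orbit p x) dvd t"
proof -
  have xo: "x \<in> orbit p x" by (rule permutation_self_in_orbit[OF assms])
  define d where "d = funpow_dist1 p x x"
  have pd: "(p^^d) x = x" using funpow_dist1_prop[OF xo] d_def by simp
  have cd: "card (orbit p x) = d"
    unfolding orbit_conv_funpow_dist1[OF xo] d_def
    by (subst card_image[OF inj_on_funpow_dist1[OF xo]]) simp
  have d0: "d > 0" by (simp add: d_def)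
  show ?thesis
  proof
    assume h: "(p^^t) x = x"
    have "(p^^(t mod d)) x = x" using funpow_mod_eq[OF pd] h by simp
    moreover have "t mod d < d" using d0 by simp
    ultimately have "t mod d = 0" using funpow_dist1_least[of "t mod d" p x x] d_def
      by (metis neq0_conv)
    then show "card (orbit p x) dvd t" using cd by (simp add: dvd_eq_mod_eq_0)
  next
    assume "card (orbit p x) dvd t"
    then obtain q where q: "t = d*q" using cd by (auto elim: dvdE)
    have "((p^^d)^^q) x = x" by (induct q) (simp_all add: pd)
    then show "(p^^t) x = x" using q by (simp add: funpow_mult)
  qed
qed

lemma nt:
  fixes a b c :: nat
  assumes h1: "\<And>t. a dvd t \<Longrightarrow> b dvd t \<Longrightarrow> c dvd 2*t"
    and h2: "\<And>t. a dvd t \<Longrightarrow> c dvd 2*t \<Longrightarrow> b dvd t"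
    and h3: "\<And>t. b dvd t \<Longrightarrow> c dvd 2*t \<Longrightarrow> a dvd t"
  shows "lcm (2 * a) (2 * b) = lcm (2 * a) c \<and>
         lcm (2 * a) c = lcm (2 * b) c \<and>
         lcm (2 * b) c = lcm (lcm (2 * a) (2 * b)) c"
proof -
  define X where "X = lcm (2*a) (2*b)"
  define Y where "Y = lcm (2*a) c"
  define Z where "Z = lcm (2*b) c"
  have X2: "X = 2 * lcm a b" unfolding X_def by (simp add: lcm_mult_left)
  have cX: "c dvd X" using h1[of "lcm a b"] X2 by simp
  have "2 dvd Y" unfolding Y_def by (rule dvd_trans[of 2 "2*a"]) simp_all
  then obtain t where t: "Y = 2*t" by (auto elim: dvdE)
  have "2*a dvd 2*t" using t unfolding Y_def by (metis dvd_lcm1)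
  hence at: "a dvd t" by simp
  have ct: "c dvd 2*t" using t unfolding Y_def by (metis dvd_lcm2)
  have "b dvd t" using h2 at ct by blast
  hence "2*b dvd Y" using t by simp
  hence XY: "X dvd Y" unfolding X_def by (simp add: Y_def)
  have "Y dvd X" unfolding Y_def using cX by (simp add: X_def)
  hence XeY: "X = Y" using XY by (simp add: dvd_antisym)
  have "2 dvd Z" unfolding Z_def by (rule dvd_trans[of 2 "2*b"]) simp_all
  then obtain s where s: "Z = 2*s" by (auto elim: dvdE)
  have "2*b dvd 2*s" using s unfolding Z_def by (metis dvd_lcm1)
  hence bs: "b dvd s" by simp
  have cs: "c dvd 2*s" using s unfolding Z_def by (metis dvd_lcm2)
  have "a dvd s" using h3 bs cs by blast
  hence "2*a dvd Z" using s by simp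
  hence XZ: "X dvd Z" unfolding X_def by (simp add: Z_def)
  have "Z dvd X" unfolding Z_def using cX by (simp add: X_def)
  hence XeZ: "X = Z" using XZ by (simp add: dvd_antisym)
  have "lcm X c = X" using cX by (simp add: lcm_proj1_iff_nat)
  thus ?thesis using XeY XeZ X_def Y_def Z_def by simp
qed


lemma tri_mem: "(x, y, z) \<in> triples n L \<longleftrightarrow> x \<in> {1..n} \<and> y \<in> {1..n} \<and> z = L x y"
  unfolding triples_def by auto

theorem lemma3p2:
  fixes n :: nat and L :: "nat \<Rightarrow> nat \<Rightarrow> nat" and \<alpha> \<beta> \<gamma> :: "nat \<Rightarrow> nat"
    and i j k :: nat
  assumes "latin_square n L"
    and "autoparatopism_12 n L \<alpha> \<beta> \<gamma>"
    and "(i, j, k) \<in> triples n L"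
  defines "a \<equiv> cycle_len (\<beta> \<circ> \<alpha>) i"
    and "b \<equiv> cycle_len (\<alpha> \<circ> \<beta>) j"
    and "c \<equiv> cycle_len \<gamma> k"
  shows "lcm (2 * a) (2 * b) = lcm (2 * a) c \<and>
         lcm (2 * a) c = lcm (2 * b) c \<and>
         lcm (2 * b) c = lcm (lcm (2 * a) (2 * b)) c"
proof -
  let ?T = "triples n L"
  have pa: "\<alpha> permutes {1..n}" and pb: "\<beta> permutes {1..n}" and pc: "\<gamma> permutes {1..n}"
    and img: "paratopism_12_image \<alpha> \<beta> \<gamma> ?T = ?T"
    using assms(2) unfolding autoparatopism_12_def by auto
  have perm_a: "permutation \<alpha>" using pa using permutes_imp_permutation[of "{1..n}"] by simp
  have perm_b: "permutation \<beta>" using pb using permutes_imp_permutation[of "{1..n}"] by simp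
  have perm_c: "permutation \<gamma>" using pc using permutes_imp_permutation[of "{1..n}"] by simp
  have perm_f: "permutation (\<beta> \<circ> \<alpha>)" using perm_a perm_b by (simp add: permutation_compose)
  have perm_g: "permutation (\<alpha> \<circ> \<beta>)" using perm_a perm_b by (simp add: permutation_compose)
  have step: "(\<beta> y, \<alpha> x, \<gamma> z) \<in> ?T" if "(x, y, z) \<in> ?T" for x y z
  proof -
    have "(\<beta> y, \<alpha> x, \<gamma> z) \<in> paratopism_12_image \<alpha> \<beta> \<gamma> ?T"
      unfolding paratopism_12_image_def using that by force
    thus ?thesis using img by simp
  qed
  have iter: "(((\<beta> \<circ> \<alpha>)^^t) i, ((\<alpha> \<circ> \<beta>)^^t) j, (\<gamma>^^(2*t)) k) \<in> ?T" for t
  proof (induct t)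
    case 0 then show ?case using assms(3) by simp
  next
    case (Suc t)
    have "(\<beta> (\<alpha> (((\<beta> \<circ> \<alpha>)^^t) i)), \<alpha> (\<beta> (((\<alpha> \<circ> \<beta>)^^t) j)), \<gamma> (\<gamma> ((\<gamma>^^(2*t)) k))) \<in> ?T"
      using step[OF step[OF Suc]] by (simp only: o_def)
    moreover have "((\<beta> \<circ> \<alpha>)^^Suc t) i = \<beta> (\<alpha> (((\<beta> \<circ> \<alpha>)^^t) i))" by simp
    moreover have "((\<alpha> \<circ> \<beta>)^^Suc t) j = \<alpha> (\<beta> (((\<alpha> \<circ> \<beta>)^^t) j))" by simp
    moreover have "(\<gamma>^^(2 * Suc t)) k = \<gamma> (\<gamma> ((\<gamma>^^(2*t)) k))"
    proof -
      have "2 * Suc t = Suc (Suc (2*t))" by simp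
      thus ?thesis by (simp only: funpow.simps comp_apply)
    qed
    ultimately show ?case by (simp only:)
  qed
  have rowinj: "y = y'" if "(x, y, z) \<in> ?T" "(x, y', z) \<in> ?T" for x y y' z
  proof -
    have "bij_betw (\<lambda>j. L x j) {1..n} {1..n}" using assms(1) that(1) unfolding latin_square_def tri_mem by auto
    hence "inj_on (\<lambda>j. L x j) {1..n}" by (rule bij_betw_imp_inj_on)
    thus ?thesis using that unfolding tri_mem by (auto dest: inj_onD)
  qed
  have colinj: "x = x'" if "(x, y, z) \<in> ?T" "(x', y, z) \<in> ?T" for x x' y z
  proof -
    have "bij_betw (\<lambda>i. L i y) {1..n} {1..n}" using assms(1) that(1) unfolding latin_square_def tri_mem by auto
    hence "inj_on (\<lambda>i. L i y) {1..n}" by (rule bij_betw_imp_inj_on)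
    thus ?thesis using that unfolding tri_mem by (auto dest: inj_onD)
  qed
  have sym: "z = z'" if "(x, y, z) \<in> ?T" "(x, y, z') \<in> ?T" for x y z z'
    using that unfolding tri_mem by auto
  have A: "a dvd t \<longleftrightarrow> ((\<beta> \<circ> \<alpha>)^^t) i = i" for t
    unfolding a_def cycle_len_def using ord_dvd[OF perm_f] by simp
  have B: "b dvd t \<longleftrightarrow> ((\<alpha> \<circ> \<beta>)^^t) j = j" for t
    unfolding b_def cycle_len_def using ord_dvd[OF perm_g] by simp
  have C: "c dvd 2*t \<longleftrightarrow> (\<gamma>^^(2*t)) k = k" for t
    unfolding c_def cycle_len_def using ord_dvd[OF perm_c] by simp
  show ?thesis
  proof (rule nt)
    fix t assume "a dvd t" "b dvd t"
    hence "(i, j, (\<gamma>^^(2*t)) k) \<in> ?T" using iter[of t] A B by simp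
    thus "c dvd 2*t" using sym[OF _ assms(3)] C by blast
  next
    fix t assume "a dvd t" "c dvd 2*t"
    hence "(i, ((\<alpha> \<circ> \<beta>)^^t) j, k) \<in> ?T" using iter[of t] A C by simp
    thus "b dvd t" using rowinj[OF _ assms(3)] B by blast
  next
    fix t assume "b dvd t" "c dvd 2*t"
    hence "(((\<beta> \<circ> \<alpha>)^^t) i, j, k) \<in> ?T" using iter[of t] B C by simp
    thus "a dvd t" using colinj[OF _ assms(3)] A by blast
  qed
qed

end
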